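(* Let $\alpha\in\mathbb{N}_0+\frac12$, $\mathbf m=(m_1,\dots,m_n)\in\mathbb{N}_0^n$, and $(t_{m_1},\dots,t_{m_n})\in\mathbb{R}^n$. Then the operator $T^{(\alpha)}_{\mathbf m}:=T^{(\alpha)}_{\tau^{(\alpha)}_{\mathbf m}}$ is an exceptional Gegenbauer operator, and $$T^{(\alpha)}_{\mathbf m}C^{(\alpha)}_{\mathbf m;i}=\lambda_iC^{(\alpha)}_{\mathbf m;i},\qquad\lambda_i=-i(2\alpha+i),\quad i\in\mathbb{N}_0.$$
   Context: For a nonzero polynomial $\tau$ and $\alpha\in\mathbb{R}$, $T^{(\alpha)}_\tau=(1-z^2)\left(D_z^2-2\frac{\tau_z}{\tau}D_z+\frac{\tau_{zz}}{\tau}\right)-(2\alpha+1)zD_z+(2\alpha-1)z\frac{\tau_z}{\tau}$; it is an exceptional Gegenbauer operator if it has polynomial eigenfunctions $\{\pi_i\}_{i\in\mathbb{N}_0}$ of pairwise distinct degrees with only finitely many nonnegative integers missing from $\{\deg\pi_i\}$. $C^{(\alpha)}_i(z)=\sum_{k=0}^{\lfloor i/2\rfloor}(-1)^k\frac{\Gamma(i-k+\alpha)}{\Gamma(\alpha)k!(i-2k)!}(2z)^{i-2k}$ are the classical Gegenbauer polynomials; $W^{(\alpha)}(z)=(1-z^2)^{\alpha-1/2}$. For $i,j\in\mathbb{N}_0$, $\rho^{(\alpha)}_{ij}(z)=\int_{-1}^zC^{(\alpha)}_i(u)C^{(\alpha)}_j(u)W^{(\alpha)}(u)\,du$. For $\mathbf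 m=(m_1,\dots,m_n)\in\mathbb{N}_0^n$ with real parameters $(t_{m_1},\dots,t_{m_n})$, $\mathcal R^{(\alpha)}_{\mathbf m}$ is the $n\times n$ matrix with entries $[\mathcal R^{(\alpha)}_{\mathbf m}]_{k\ell}=\delta_{k\ell}+t_{m_\ell}\rho^{(\alpha)}_{m_km_\ell}(z)$; $\tau^{(\alpha)}_{\mathbf m}=\det\mathcal R^{(\alpha)}_{\mathbf m}$; $\mathbf Q^{(\alpha)}_{\mathbf m}=\tau^{(\alpha)}_{\mathbf m}(\mathcal R^{(\alpha)}_{\mathbf m})^{-1}(C^{(\alpha)}_{m_1},\dots,C^{(\alpha)}_{m_n})^T$. For $i\in\mathbb{N}_0$, the exceptional Gegenbauer polynomial of the second kind $C^{(\alpha)}_{\mathbf m;i}$ is the $(n+1)$-st entry of $\mathbf Q^{(\alpha)}_{(m_1,\dots,m_n,i)}$ computed with parameters $(t_{m_1},\dots,t_{m_n},s)$, $s\in\mathbb{R}$ arbitrary (the entry does not depend on $s$). *)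

theory Defs
  imports "HOL-Analysis.Gamma_Function" "HOL-Computational_Algebra.Polynomial"
    "Jordan_Normal_Form.Determinant"
begin

text \<open>The operator T^(alpha)_tau applied to a polynomial p, evaluated at a point z
  (meaningful where tau(z) is nonzero).\<close>
definition gop :: "real \<Rightarrow> real poly \<Rightarrow> real poly \<Rightarrow> real \<Rightarrow> real" where
  "gop \<alpha> \<tau> p z =
     (1 - z^2) * (poly (pderiv (pderiv p)) z
                   - 2 * (poly (pderiv \<tau>) z / poly \<tau> z) * poly (pderiv p) z
                   + (poly (pderiv (pderiv \<tau>)) z / poly \<tau> z) * poly p z)
     - (2*\<alpha> + 1) * z * poly (pderiv p) z
     + (2*\<alpha> - 1) * z * (poly (pderiv \<tau>) z / poly \<tau> z) * poly p z"

definition is_eigenfunction :: "real \<Rightarrow> real poly \<Rightarrow> real poly \<Rightarrow> real \<Rightarrow> bool" where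
  "is_eigenfunction \<alpha> \<tau> p lam \<longleftrightarrow> (\<forall>z. poly \<tau> z \<noteq> 0 \<longrightarrow> gop \<alpha> \<tau> p z = lam * poly p z)"

definition exceptional_gegenbauer_operator :: "real \<Rightarrow> real poly \<Rightarrow> bool" where
  "exceptional_gegenbauer_operator \<alpha> \<tau> \<longleftrightarrow> \<tau> \<noteq> 0 \<and>
     (\<exists>\<pi> :: nat \<Rightarrow> real poly. (\<forall>i. \<pi> i \<noteq> 0 \<and> (\<exists>lam. is_eigenfunction \<alpha> \<tau> (\<pi> i) lam))
        \<and> inj (\<lambda>i. degree (\<pi> i))
        \<and> finite (UNIV - range (\<lambda>i. degree (\<pi> i))))"

definition gegenbauer :: "real \<Rightarrow> nat \<Rightarrow> real poly" where
  "gegenbauer \<alpha> i = (\<Sum>k\<le>i div 2.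
      monom ((-1)^k * Gamma (real (i - k) + \<alpha>) / (Gamma \<alpha> * fact k * fact (i - 2*k))
             * 2 ^ (i - 2*k)) (i - 2*k))"

definition poly_antideriv :: "real poly \<Rightarrow> real poly" where
  "poly_antideriv p = (\<Sum>j\<le>degree p. monom (coeff p j / real (Suc j)) (Suc j))"

text \<open>For alpha = k + 1/2 the weight (1-z^2)^(alpha-1/2) is the polynomial (1-z^2)^k,
  and rho_ij(z) = integral from -1 to z of C_i C_j W, a polynomial.\<close>
definition weight :: "nat \<Rightarrow> real poly" where
  "weight k = [:1, 0, -1:] ^ k"

definition rho :: "nat \<Rightarrow> nat \<Rightarrow> nat \<Rightarrow> real poly" where
  "rho k i j = (let \<alpha> = real k + 1/2;
                    P = poly_antideriv (gegenbauer \<alpha> i * gegenbauer \<alpha> j * weight k)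
                in P - [:poly P (-1):])"

text \<open>The matrix R_m, with ms = (m_1..m_n) and ps = parameters (t_{m_1}..t_{m_n}), 0-indexed.\<close>
definition Rmat :: "nat \<Rightarrow> nat list \<Rightarrow> real list \<Rightarrow> real poly mat" where
  "Rmat k ms ps = mat (length ms) (length ms)
     (\<lambda>(a, b). (if a = b then 1 else 0) + smult (ps ! b) (rho k (ms ! a) (ms ! b)))"

definition tau :: "nat \<Rightarrow> nat list \<Rightarrow> real list \<Rightarrow> real poly" where
  "tau k ms ps = det (Rmat k ms ps)"

text \<open>Q_m = tau R^{-1} (C_{m_1},...,C_{m_n})^T = adj(R) (C_{m_1},...)^T.\<close>
definition Qvec :: "nat \<Rightarrow> nat list \<Rightarrow> real list \<Rightarrow> real poly vec" where
  "Qvec k ms ps = adj_mat (Rmat k ms ps) *\<^sub>v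
     vec (length ms) (\<lambda>a. gegenbauer (real k + 1/2) (ms ! a))"

text \<open>Exceptional Gegenbauer polynomial of the second kind C_{m;i}, computed with the
  extra parameter s for the appended index i.\<close>
definition xgegenbauer :: "nat \<Rightarrow> nat list \<Rightarrow> real list \<Rightarrow> real \<Rightarrow> nat \<Rightarrow> real poly" where
  "xgegenbauer k ms ps s i = Qvec k (ms @ [i]) (ps @ [s]) $ length ms"

end

theory Submission
  imports Defs
begin

lemma coeff_x_mult: "coeff ([:0,1:] * (p::real poly)) n = (if n = 0 then 0 else coeff p (n-1))"
  by (cases n) (auto simp: coeff_pCons)

lemma coeff_x_pderiv: "coeff ([:0,1:] * pderiv (p::real poly)) n = of_nat n * coeff p n"
  by (cases n) (auto simp: coeff_x_mult coeff_pderiv)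

lemma coeff_x2_pderiv2: "coeff ([:0,1:] * ([:0,1:] * pderiv (pderiv p))) n = of_nat n * (of_nat n - 1) * coeff (p :: real poly) n"
proof (cases n)
  case 0 then show ?thesis by (simp add: coeff_x_mult)
next
  case (Suc m)
  then show ?thesis by (cases m) (auto simp: coeff_x_mult coeff_pderiv algebra_simps)
qed

definition gc :: "real \<Rightarrow> nat \<Rightarrow> nat \<Rightarrow> real" where
  "gc \<alpha> i j = (-1)^j * Gamma (real (i - j) + \<alpha>) / (Gamma \<alpha> * fact j * fact (i - 2*j)) * 2 ^ (i - 2*j)"

lemma coeff_geg: "coeff (gegenbauer \<alpha> i) m = (if m \<le> i \<and> even (i - m) then gc \<alpha> i ((i-m) div 2) else 0)"
proof -
  have "coeff (gegenbauer \<alpha> i) m = (\<Sum>j\<le>i div 2. if i - 2*j = m then gc \<alpha> i j else 0)"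
    unfolding gegenbauer_def coeff_sum coeff_monom gc_def by (intro sum.cong) auto
  also have "\<dots> = (\<Sum>j\<le>i div 2. if j = (i-m) div 2 then (if m \<le> i \<and> even (i - m) then gc \<alpha> i j else 0) else 0)"
  proof (intro sum.cong refl)
    fix x assume "x \<in> {..i div 2}"
    then have "(i - 2*x = m) \<longleftrightarrow> (x = (i-m) div 2 \<and> m \<le> i \<and> even (i - m))" by auto
    then show "(if i - 2*x = m then gc \<alpha> i x else 0) = (if x = (i-m) div 2 then (if m \<le> i \<and> even (i - m) then gc \<alpha> i x else 0) else 0)"
      by auto
  qed
  also have "\<dots> = (if m \<le> i \<and> even (i - m) then gc \<alpha> i ((i-m) div 2) else 0)"
    by (subst sum.delta) auto
  finally show ?thesis .
qed

lemma gc_rec: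
  assumes "\<alpha> > 0" "2 * Suc j \<le> i"
  shows "gc \<alpha> i j * (real (i - 2*j)) * (real (i - 2*j) - 1) = - 4 * (real j + 1) * (real (i - j) - 1 + \<alpha>) * gc \<alpha> i (Suc j)"
proof -
  obtain r where r: "i = 2 * Suc j + r" using assms(2) le_Suc_ex by blast
  have e1: "i - j = Suc (r + Suc j)" "i - Suc j = r + Suc j" "i - 2*j = Suc (Suc r)" "i - 2 * Suc j = r" using r by auto
  have np: "real (r + Suc j) + \<alpha> \<notin> \<int>\<^sub>\<le>\<^sub>0" using assms(1) by (auto dest!: nonpos_Ints_nonpos)
  have "Gamma (real (r + Suc j) + \<alpha> + 1) = (real (r + Suc j) + \<alpha>) * Gamma (real (r + Suc j) + \<alpha>)"
    by (rule Gamma_plus1[OF np])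
  moreover have "real (Suc (r + Suc j)) + \<alpha> = real (r + Suc j) + \<alpha> + 1" by simp
  ultimately have g: "Gamma (real (Suc (r + Suc j)) + \<alpha>) = (real (r + Suc j) + \<alpha>) * Gamma (real (r + Suc j) + \<alpha>)"
    by metis
  have G: "Gamma \<alpha> \<noteq> 0" using assms(1) by (auto simp: Gamma_eq_zero_iff dest!: nonpos_Ints_nonpos)
  define \<Gamma>0 where "\<Gamma>0 = Gamma (real (r + Suc j) + \<alpha>)"
  have A: "gc \<alpha> i j = (-1)^j * ((real (r + Suc j) + \<alpha>) * \<Gamma>0) / (Gamma \<alpha> * fact j * ((real r + 2)*(real r+1)*fact r)) * (4 * 2^r)"
    unfolding gc_def e1 g \<Gamma>0_def by (simp add: fact_reduce algebra_simps)
  have B: "gc \<alpha> i (Suc j) = - ((-1)^j * \<Gamma>0 / (Gamma \<alpha> * ((real j + 1) * fact j) * fact r) * 2^r)"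
    unfolding gc_def e1 \<Gamma>0_def by (simp add: algebra_simps)
  have C: "real (i - 2*j) = real r + 2" "real (i - j) = real r + real j + 2" using e1 by simp_all
  have F: "fact j \<noteq> (0::real)" "fact r \<noteq> (0::real)" by simp_all
  define c where "c = (-1)^j * \<Gamma>0 * 2^r / (Gamma \<alpha> * fact j * fact r)"
  have A': "gc \<alpha> i j = 4 * (real r + real j + 1 + \<alpha>) * c / ((real r + 2)*(real r + 1))"
    unfolding A c_def by (simp add: field_simps)
  have B': "gc \<alpha> i (Suc j) = - c / (real j + 1)"
    unfolding B c_def by (simp add: field_simps)
  have nz: "real r + 2 \<noteq> 0" "real r + 1 \<noteq> 0" "real j + 1 \<noteq> 0" by linarith+
  have L: "4 * (real r + real j + 1 + \<alpha>) * c / ((real r + 2)*(real r + 1)) * (real r + 2) * (real r + 2 - 1)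
     = 4 * (real r + real j + 1 + \<alpha>) * c"
  proof -
    have aux: "\<And>B D X. B \<noteq> 0 \<Longrightarrow> D \<noteq> 0 \<Longrightarrow> X / (B*D) * B * D = (X::real)" by simp
    have e: "real r + 2 - 1 = real r + 1" by simp
    show ?thesis unfolding e by (rule aux[OF nz(1) nz(2)])
  qed
  have R: "- 4 * (real j + 1) * (real r + real j + 2 - 1 + \<alpha>) * (- c / (real j + 1)) = 4 * (real r + real j + 1 + \<alpha>) * c"
    using nz by (simp add: field_simps)
  show ?thesis unfolding A' B' C using L R by simp
qed

lemma geg_ode:
  assumes "\<alpha> > 0"
  shows "pderiv (pderiv (gegenbauer \<alpha> i)) - [:0,1:] * ([:0,1:] * pderiv (pderiv (gegenbauer \<alpha> i)))
     - smult (2*\<alpha>+1) ([:0,1:] * pderiv (gegenbauer \<alpha> i)) = smult (- real i * (2*\<alpha> + real i)) (gegenbauer \<alpha> i)"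
    (is "?L = ?R")
proof (rule poly_eqI)
  fix m
  define a where "a = coeff (gegenbauer \<alpha> i)"
  have cL: "coeff ?L m = real (Suc m) * real (Suc (Suc m)) * a (Suc (Suc m)) - real m * (real m - 1) * a m - (2*\<alpha>+1) * real m * a m"
    unfolding a_def by (simp only: coeff_diff coeff_smult coeff_x2_pderiv2 coeff_x_pderiv coeff_pderiv)
  have cR: "coeff ?R m = - real i * (2*\<alpha> + real i) * a m" unfolding a_def by simp
  show "coeff ?L m = coeff ?R m"
  proof (cases "m \<le> i \<and> even (i - m)")
    case True
    define j where "j = (i - m) div 2"
    have mj: "m = i - 2*j" "2*j \<le> i" using True unfolding j_def by auto
    have am: "a m = gc \<alpha> i j" unfolding a_def coeff_geg j_def using True by (simp only: True simp_thms if_True)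
    show ?thesis
    proof (cases j)
      case 0
      have "a (Suc (Suc m)) = 0" unfolding a_def coeff_geg using mj 0 by simp
      then show ?thesis unfolding cL cR using mj 0 by (simp add: algebra_simps)
    next
      case (Suc j')
      have ij: "Suc (Suc m) \<le> i \<and> even (i - Suc (Suc m))" "(i - Suc (Suc m)) div 2 = j'"
        using mj Suc True by auto
      have a2: "a (Suc (Suc m)) = gc \<alpha> i j'" unfolding a_def coeff_geg by (simp only: ij simp_thms if_True)
      have rec: "gc \<alpha> i j' * (real (i - 2*j')) * (real (i - 2*j') - 1) = - 4 * (real j' + 1) * (real (i - j') - 1 + \<alpha>) * gc \<alpha> i (Suc j')"
        by (rule gc_rec) (use assms mj Suc in auto)
      have r1: "real (i - 2*j') = real m + 2" "real (i - j') = real i - real j' " using mj Suc by auto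
      have r2: "real m = real i - 2 * real j' - 2" using mj Suc by auto
      show ?thesis unfolding cL cR a2 am Suc using rec unfolding r1
        by (simp add: r2 algebra_simps)
    qed
  next
    case False
    then have "a m = 0" "a (Suc (Suc m)) = 0" unfolding a_def coeff_geg by auto
    then show ?thesis unfolding cL cR by simp
  qed
qed



lemma pderiv_sum': "pderiv (\<Sum>x\<in>X. f x) = (\<Sum>x\<in>X. pderiv (f x))"
  by (induction X rule: infinite_finite_induct) (auto simp: pderiv_add)

lemma pderiv_sum_mult: "pderiv (\<Sum>b\<in>B. f b * g b) = (\<Sum>b\<in>B. pderiv (f b) * g b) + (\<Sum>b\<in>B. f b * pderiv (g b :: real poly))"
  by (simp add: pderiv_sum' pderiv_mult sum.distrib[symmetric] algebra_simps)

lemma sum_delta_r: "b<(n::nat) \<Longrightarrow> (\<Sum>c<n. f c * (if c = b then x else 0)) = f b * (x::'a::comm_ring_1)"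
proof -
  assume b: "b<n"
  have "(\<Sum>c<n. f c * (if c = b then x else 0)) = (\<Sum>c<n. if c = b then f c * x else 0)"
    by (intro sum.cong) auto
  also have "\<dots> = f b * x" using b by (simp only: sum.delta finite_lessThan lessThan_iff if_True)
  finally show ?thesis .
qed

lemma sum_delta_l: "b<(n::nat) \<Longrightarrow> (\<Sum>c<n. (if b = c then x else 0) * f c) = x * (f b::'a::comm_ring_1)"
proof -
  assume b: "b<n"
  have "(\<Sum>c<n. (if b = c then x else 0) * f c) = (\<Sum>c<n. if b = c then x * f c else 0)"
    by (intro sum.cong) auto
  also have "\<dots> = x * f b" using b by (simp only: sum.delta' finite_lessThan lessThan_iff if_True)
  finally show ?thesis .
qed

lemma swap_mult: "(\<Sum>a<n. (\<Sum>c<n. f c * g c a) * h a) = (\<Sum>c<(n::nat). f c * (\<Sum>a<n. g c a * (h a::'a::comm_ring_1)))"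
proof -
  have "(\<Sum>a<n. (\<Sum>c<n. f c * g c a) * h a) = (\<Sum>a<n. \<Sum>c<n. f c * (g c a * h a))"
    by (simp only: sum_distrib_right mult.assoc)
  also have "\<dots> = (\<Sum>c<n. \<Sum>a<n. f c * (g c a * h a))" by (rule sum.swap)
  also have "\<dots> = (\<Sum>c<(n::nat). f c * (\<Sum>a<n. g c a * h a))" by (simp only: sum_distrib_left)
  finally show ?thesis .
qed

lemma triple_swap: "(\<Sum>b<n. \<Sum>c<n. \<Sum>a<n. f b c a) = (\<Sum>c<(n::nat). \<Sum>a<n. \<Sum>b<n. (f b c a :: 'a::comm_ring_1))"
proof -
  have "(\<Sum>b<n. \<Sum>c<n. \<Sum>a<n. f b c a) = (\<Sum>c<n. \<Sum>b<n. \<Sum>a<n. f b c a)" by (rule sum.swap)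
  also have "\<dots> = (\<Sum>c<(n::nat). \<Sum>a<n. \<Sum>b<n. f b c a)" by (intro sum.cong refl sum.swap)
  finally show ?thesis .
qed


definition "Nop \<tau> \<alpha> y = [:1,0,-1:] * (\<tau> * pderiv (pderiv y) - 2 * pderiv \<tau> * pderiv y + pderiv (pderiv \<tau>) * y)
   - smult (2*\<alpha>+1) ([:0,1:] * \<tau> * pderiv y) + smult (2*\<alpha>-1) ([:0,1:] * pderiv \<tau> * y)"

locale core =
  fixes n :: nat and R A :: "nat \<Rightarrow> nat \<Rightarrow> real poly" and \<tau> W p :: "real poly"
    and \<Phi> tt ll :: "nat \<Rightarrow> real poly"
  assumes RA: "\<And>a b. a<n \<Longrightarrow> b<n \<Longrightarrow> (\<Sum>c<n. R a c * A c b) = (if a=b then \<tau> else 0)"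
    and AR: "\<And>a b. a<n \<Longrightarrow> b<n \<Longrightarrow> (\<Sum>c<n. A a c * R c b) = (if a=b then \<tau> else 0)"
    and jac: "pderiv \<tau> = (\<Sum>a<n. \<Sum>b<n. A b a * pderiv (R a b))"
    and dR: "\<And>a b. a<n \<Longrightarrow> b<n \<Longrightarrow> pderiv (R a b) = tt b * W * \<Phi> a * \<Phi> b"
    and com: "\<And>a b. a<n \<Longrightarrow> b<n \<Longrightarrow> (ll a - ll b) * R a b = tt b * p * (pderiv (\<Phi> a) * \<Phi> b - \<Phi> a * pderiv (\<Phi> b))"
    and symA: "\<And>a b. a<n \<Longrightarrow> b<n \<Longrightarrow> tt a * A a b = tt b * A b a"
    and ode: "\<And>a. a<n \<Longrightarrow> pderiv (p * pderiv (\<Phi> a)) = ll a * W * \<Phi> a"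
    and dtt: "\<And>b. pderiv (tt b) = 0"
    and tnz: "\<tau> \<noteq> 0"
begin

definition "Q e = (\<Sum>b<n. A e b * \<Phi> b)"
definition "S = (\<Sum>b<n. tt b * \<Phi> b * Q b)"
definition "K = (\<Sum>b<n. tt b * pderiv (\<Phi> b) * Q b)"

lemma c1: "pderiv \<tau> = W * S"
proof -
  have "pderiv \<tau> = (\<Sum>a<n. \<Sum>b<n. A b a * (tt b * W * \<Phi> a * \<Phi> b))"
    unfolding jac by (intro sum.cong refl) (simp add: dR)
  also have "\<dots> = (\<Sum>b<n. \<Sum>a<n. A b a * (tt b * W * \<Phi> a * \<Phi> b))" by (rule sum.swap)
  also have "\<dots> = W * S" unfolding S_def Q_def
    by (simp add: sum_distrib_left mult_ac)
  finally show ?thesis .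
qed

lemma dRA: "a<n \<Longrightarrow> b<n \<Longrightarrow> (\<Sum>c<n. pderiv (R a c) * A c b) + (\<Sum>c<n. R a c * pderiv (A c b)) = (if a=b then pderiv \<tau> else 0)"
proof -
  assume ab: "a<n" "b<n"
  have "pderiv (\<Sum>c<n. R a c * A c b) = (if a=b then pderiv \<tau> else 0)" using RA[OF ab] by simp
  then show ?thesis by (simp add: pderiv_sum' pderiv_mult sum.distrib mult_ac)
qed

lemma c2: assumes e: "e<n" and b: "b<n"
  shows "\<tau> * pderiv (A e b) = A e b * pderiv \<tau> - (\<Sum>c<n. A e c * (\<Sum>a<n. pderiv (R c a) * A a b))"
proof -
  have "\<tau> * pderiv (A e b) = (\<Sum>a<n. (if e = a then \<tau> else 0) * pderiv (A a b))"
    by (rule sum_delta_l[OF e, symmetric])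
  also have "\<dots> = (\<Sum>a<n. (\<Sum>c<n. A e c * R c a) * pderiv (A a b))"
    by (intro sum.cong refl) (simp add: AR e)
  also have "\<dots> = (\<Sum>c<n. A e c * (\<Sum>a<n. R c a * pderiv (A a b)))"
    by (rule swap_mult)
  also have "\<dots> = (\<Sum>c<n. A e c * ((if c = b then pderiv \<tau> else 0) - (\<Sum>a<n. pderiv (R c a) * A a b)))"
  proof (intro sum.cong refl)
    fix c assume "c \<in> {..<n}"
    then have h: "(\<Sum>a<n. pderiv (R c a) * A a b) + (\<Sum>a<n. R c a * pderiv (A a b)) = (if c=b then pderiv \<tau> else 0)"
      using dRA b by auto
    show "A e c * (\<Sum>a<n. R c a * pderiv (A a b)) = A e c * ((if c = b then pderiv \<tau> else 0) - (\<Sum>a<n. pderiv (R c a) * A a b))"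
      by (simp add: h[symmetric])
  qed
  also have "\<dots> = (\<Sum>c<n. A e c * (if c = b then pderiv \<tau> else 0)) - (\<Sum>c<n. A e c * (\<Sum>a<n. pderiv (R c a) * A a b))"
    by (simp only: right_diff_distrib sum_subtractf)
  also have "\<dots> = A e b * pderiv \<tau> - (\<Sum>c<n. A e c * (\<Sum>a<n. pderiv (R c a) * A a b))"
    by (simp only: sum_delta_r[OF b])
  finally show ?thesis .
qed

lemma c2v: assumes e: "e<n"
  shows "\<tau> * (\<Sum>b<n. pderiv (A e b) * v b) = W * (S * (\<Sum>b<n. A e b * v b) - Q e * (\<Sum>c<n. tt c * \<Phi> c * (\<Sum>b<n. A c b * v b)))"
proof -
  have "\<tau> * (\<Sum>b<n. pderiv (A e b) * v b) = (\<Sum>b<n. (\<tau> * pderiv (A e b)) * v b)"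
    by (simp add: sum_distrib_left mult.assoc)
  also have "\<dots> = (\<Sum>b<n. (A e b * pderiv \<tau> - (\<Sum>c<n. A e c * (\<Sum>a<n. pderiv (R c a) * A a b))) * v b)"
    by (intro sum.cong refl) (simp add: c2 e)
  also have "\<dots> = (\<Sum>b<n. (A e b * pderiv \<tau>) * v b) - (\<Sum>b<n. (\<Sum>c<n. A e c * (\<Sum>a<n. pderiv (R c a) * A a b)) * v b)"
    by (simp only: left_diff_distrib sum_subtractf)
  also have "(\<Sum>b<n. (A e b * pderiv \<tau>) * v b) = pderiv \<tau> * (\<Sum>b<n. A e b * v b)"
    by (simp add: sum_distrib_left mult_ac)
  also have "(\<Sum>b<n. (\<Sum>c<n. A e c * (\<Sum>a<n. pderiv (R c a) * A a b)) * v b)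
     = (\<Sum>b<n. \<Sum>c<n. \<Sum>a<n. A e c * pderiv (R c a) * A a b * v b)"
    by (simp add: sum_distrib_left sum_distrib_right mult_ac)
  also have "\<dots> = (\<Sum>b<n. \<Sum>c<n. \<Sum>a<n. A e c * (tt a * W * \<Phi> c * \<Phi> a) * A a b * v b)"
    by (intro sum.cong refl) (simp add: dR)
  also have "(\<Sum>b<n. \<Sum>c<n. \<Sum>a<n. A e c * (tt a * W * \<Phi> c * \<Phi> a) * A a b * v b)
      = (\<Sum>c<n. \<Sum>a<n. \<Sum>b<n. A e c * (tt a * W * \<Phi> c * \<Phi> a) * A a b * v b)"
    by (rule triple_swap)
  also have "\<dots> = (\<Sum>c<n. A e c * \<Phi> c * (W * (\<Sum>a<n. tt a * \<Phi> a * (\<Sum>b<n. A a b * v b))))"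
    by (intro sum.cong refl) (simp add: sum_distrib_left sum_distrib_right mult_ac)
  also have "\<dots> = W * Q e * (\<Sum>c<n. tt c * \<Phi> c * (\<Sum>b<n. A c b * v b))"
    unfolding Q_def sum_distrib_right[symmetric] by (simp add: mult_ac)
  finally show ?thesis unfolding c1 by (simp add: algebra_simps)
qed

lemma c3: assumes e: "e<n" shows "pderiv (Q e) = (\<Sum>b<n. A e b * pderiv (\<Phi> b))"
proof -
  have "\<tau> * (\<Sum>b<n. pderiv (A e b) * \<Phi> b) = 0"
    unfolding c2v[OF e] by (simp only: Q_def[symmetric]) (simp add: S_def mult_ac)
  then have z: "(\<Sum>b<n. pderiv (A e b) * \<Phi> b) = 0" using tnz by simp
  have "pderiv (Q e) = (\<Sum>b<n. pderiv (A e b) * \<Phi> b) + (\<Sum>b<n. A e b * pderiv (\<Phi> b))"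
    unfolding Q_def by (simp add: pderiv_sum' pderiv_mult sum.distrib mult_ac)
  then show ?thesis using z by simp
qed

lemma c4: "(\<Sum>b<n. tt b * \<Phi> b * pderiv (Q b)) = K"
proof -
  have "(\<Sum>b<n. tt b * \<Phi> b * pderiv (Q b)) = (\<Sum>b<n. \<Sum>c<n. \<Phi> b * (tt b * A b c) * pderiv (\<Phi> c))"
    by (simp add: c3 sum_distrib_left mult_ac)
  also have "\<dots> = (\<Sum>b<n. \<Sum>c<n. \<Phi> b * (tt c * A c b) * pderiv (\<Phi> c))"
    by (intro sum.cong refl) (simp add: symA)
  also have "\<dots> = (\<Sum>c<n. \<Sum>b<n. \<Phi> b * (tt c * A c b) * pderiv (\<Phi> c))" by (rule sum.swap)
  also have "\<dots> = K" unfolding K_def Q_def by (simp add: sum_distrib_left mult_ac)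
  finally show ?thesis .
qed

lemma c5: "pderiv S = 2 * K"
proof -
  have "pderiv S = (\<Sum>b<n. tt b * pderiv (\<Phi> b) * Q b) + (\<Sum>b<n. tt b * \<Phi> b * pderiv (Q b))"
    unfolding S_def by (simp add: pderiv_sum' pderiv_mult dtt sum.distrib algebra_simps)
  then show ?thesis using c4 unfolding K_def by simp
qed

lemma c6a: assumes e: "e<n" and b: "b<n"
  shows "\<tau> * (A e b * ll b) - \<tau> * (ll e * A e b) = (\<Sum>a<n. \<Sum>c<n. A e a * ((ll a - ll c) * R a c) * A c b)"
proof -
  have 1: "(\<Sum>a<n. \<Sum>c<n. A e a * ll a * R a c * A c b) = \<tau> * (A e b * ll b)"
  proof -
    have "(\<Sum>a<n. \<Sum>c<n. A e a * ll a * R a c * A c b) = (\<Sum>a<n. A e a * ll a * (\<Sum>c<n. R a c * A c b))"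
      by (simp add: sum_distrib_left mult_ac)
    also have "\<dots> = (\<Sum>a<n. A e a * ll a * (if a = b then \<tau> else 0))"
      by (intro sum.cong refl) (simp add: RA b)
    also have "\<dots> = \<tau> * (A e b * ll b)" by (subst sum_delta_r[OF b]) (simp add: mult_ac)
    finally show ?thesis .
  qed
  have 2: "(\<Sum>a<n. \<Sum>c<n. A e a * ll c * R a c * A c b) = \<tau> * (ll e * A e b)"
  proof -
    have "(\<Sum>a<n. \<Sum>c<n. A e a * ll c * R a c * A c b) = (\<Sum>c<n. \<Sum>a<n. A e a * ll c * R a c * A c b)"
      by (rule sum.swap)
    also have "\<dots> = (\<Sum>c<n. (\<Sum>a<n. A e a * R a c) * (ll c * A c b))"
      by (simp add: sum_distrib_left sum_distrib_right mult_ac)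
    also have "\<dots> = (\<Sum>c<n. (if e = c then \<tau> else 0) * (ll c * A c b))"
      by (intro sum.cong refl) (simp add: AR e)
    also have "\<dots> = \<tau> * (ll e * A e b)" by (rule sum_delta_l[OF e])
    finally show ?thesis .
  qed
  have "(\<Sum>a<n. \<Sum>c<n. A e a * ((ll a - ll c) * R a c) * A c b)
      = (\<Sum>a<n. \<Sum>c<n. A e a * ll a * R a c * A c b) - (\<Sum>a<n. \<Sum>c<n. A e a * ll c * R a c * A c b)"
    by (simp add: algebra_simps sum_subtractf)
  then show ?thesis using 1 2 by simp
qed

lemma c6: assumes e: "e<n"
  shows "\<tau> * (\<Sum>b<n. A e b * (ll b * \<Phi> b)) = ll e * \<tau> * Q e + p * (pderiv (Q e) * S - Q e * K)"
proof -
  have "\<tau> * (\<Sum>b<n. A e b * (ll b * \<Phi> b)) - ll e * \<tau> * Q e = (\<Sum>b<n. (\<tau> * (A e b * ll b) - \<tau> * (ll e * A e b)) * \<Phi> b)"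
    unfolding Q_def by (simp add: sum_distrib_left algebra_simps sum_subtractf)
  also have "\<dots> = (\<Sum>b<n. (\<Sum>a<n. \<Sum>c<n. A e a * ((ll a - ll c) * R a c) * A c b) * \<Phi> b)"
    by (intro sum.cong refl) (simp add: c6a e)
  also have "\<dots> = (\<Sum>b<n. \<Sum>a<n. \<Sum>c<n. A e a * (tt c * p * (pderiv (\<Phi> a) * \<Phi> c - \<Phi> a * pderiv (\<Phi> c))) * A c b * \<Phi> b)"
    by (intro sum.cong refl) (simp add: com sum_distrib_right)
  also have "\<dots> = (\<Sum>a<n. \<Sum>c<n. \<Sum>b<n. A e a * (tt c * p * (pderiv (\<Phi> a) * \<Phi> c - \<Phi> a * pderiv (\<Phi> c))) * A c b * \<Phi> b)"
    by (rule triple_swap)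
  also have "\<dots> = (\<Sum>a<n. \<Sum>c<n. A e a * (tt c * p * (pderiv (\<Phi> a) * \<Phi> c - \<Phi> a * pderiv (\<Phi> c))) * Q c)"
  proof -
    have h: "\<And>X c. (\<Sum>b<n. X * A c b * \<Phi> b) = X * Q c" by (simp add: Q_def sum_distrib_left mult.assoc)
    show ?thesis by (simp only: h)
  qed
  also have "\<dots> = p * ((\<Sum>a<n. A e a * pderiv (\<Phi> a)) * S - (\<Sum>a<n. A e a * \<Phi> a) * K)"
    unfolding S_def K_def sum_product by (simp add: sum_distrib_left algebra_simps sum_subtractf)
  also have "\<dots> = p * (pderiv (Q e) * S - Q e * K)" by (simp only: c3[OF e]) (simp add: Q_def)
  finally show ?thesis by (simp add: algebra_simps)
qed

lemma c7: assumes e: "e<n"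
  shows "\<tau> * pderiv (p * pderiv (Q e)) = W * (ll e * \<tau> * Q e + 2 * p * (S * pderiv (Q e) - Q e * K))"
proof -
  have pq: "p * pderiv (Q e) = (\<Sum>b<n. A e b * (p * pderiv (\<Phi> b)))"
    by (simp add: c3 e sum_distrib_left mult_ac)
  have "pderiv (p * pderiv (Q e)) = (\<Sum>b<n. pderiv (A e b) * (p * pderiv (\<Phi> b))) + (\<Sum>b<n. A e b * pderiv (p * pderiv (\<Phi> b)))"
    unfolding pq by (rule pderiv_sum_mult)
  also have "(\<Sum>b<n. A e b * pderiv (p * pderiv (\<Phi> b))) = W * (\<Sum>b<n. A e b * (ll b * \<Phi> b))"
    by (simp add: ode sum_distrib_left mult_ac)
  finally have 1: "\<tau> * pderiv (p * pderiv (Q e)) = \<tau> * (\<Sum>b<n. pderiv (A e b) * (p * pderiv (\<Phi> b))) + W * (\<tau> * (\<Sum>b<n. A e b * (ll b * \<Phi> b)))"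
    by (simp add: algebra_simps)
  have 2: "\<tau> * (\<Sum>b<n. pderiv (A e b) * (p * pderiv (\<Phi> b))) = W * (S * (p * pderiv (Q e)) - Q e * (p * K))"
  proof -
    have a: "(\<Sum>c<n. tt c * \<Phi> c * (\<Sum>b<n. A c b * (p * pderiv (\<Phi> b)))) = p * K"
    proof -
      have "(\<Sum>c<n. tt c * \<Phi> c * (\<Sum>b<n. A c b * (p * pderiv (\<Phi> b)))) = (\<Sum>c<n. p * (tt c * \<Phi> c * pderiv (Q c)))"
        by (intro sum.cong refl) (simp add: c3 sum_distrib_left mult_ac)
      also have "\<dots> = p * K" using c4 by (simp add: sum_distrib_left[symmetric])
      finally show ?thesis .
    qed
    show ?thesis unfolding c2v[OF e] a pq[symmetric] ..
  qed
  show ?thesis unfolding 1 2 c6[OF e] by (simp add: algebra_simps)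
qed

lemma main_eq:
  assumes e: "e<n" and hp: "p = [:1,0,-1:] * W"
    and hW: "[:1,0,-1:] * pderiv W = - smult (2*\<alpha>-1) ([:0,1:] * W)" and Wnz: "W \<noteq> 0"
  shows "Nop \<tau> \<alpha> (Q e) = ll e * \<tau> * Q e"
proof -
  define u :: "real poly" where "u = [:1,0,-1:]"
  define z :: "real poly" where "z = [:0,1:]"
  have du: "pderiv u = - [:2:] * z" unfolding u_def z_def by (simp add: pderiv_pCons)
  have hW': "u * pderiv W = - [:2*\<alpha>-1:] * z * W" unfolding u_def z_def hW by (simp add: mult.assoc flip: smult_minus_left)
  have dp: "pderiv p = - [:2*\<alpha>+1:] * z * W"
  proof -
    have "pderiv p = pderiv u * W + u * pderiv W" unfolding hp u_def[symmetric] by (subst pderiv_mult) (simp only: ac_simps)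
    also have "\<dots> = - [:2*\<alpha>+1:] * z * W" unfolding du hW' by (simp add: algebra_simps) (simp add: smult_add_left[symmetric])
    finally show ?thesis .
  qed
  have d2t: "pderiv (pderiv \<tau>) = pderiv W * S + W * (2 * K)" unfolding c1 by (simp add: pderiv_mult c5 algebra_simps)
  have d2q: "p * pderiv (pderiv (Q e)) = pderiv (p * pderiv (Q e)) - pderiv p * pderiv (Q e)"
    by (simp add: pderiv_mult algebra_simps)
  have c7': "\<tau> * pderiv (p * pderiv (Q e)) = W * (ll e * \<tau> * Q e + 2 * p * (S * pderiv (Q e) - Q e * K))" by (rule c7[OF e])
  have "W * Nop \<tau> \<alpha> (Q e) = \<tau> * (p * pderiv (pderiv (Q e))) - 2 * p * pderiv \<tau> * pderiv (Q e)
      + (u * pderiv W) * W * S * Q e + 2 * W * p * K * Q e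
      - [:2*\<alpha>+1:] * z * W * \<tau> * pderiv (Q e) + [:2*\<alpha>-1:] * z * W * pderiv \<tau> * Q e"
    unfolding Nop_def d2t hp u_def z_def by (simp add: algebra_simps)
  also have "\<dots> = W * (ll e * \<tau> * Q e)"
    unfolding d2q hW' right_diff_distrib c7' dp c1 by (simp add: algebra_simps) (simp add: smult_add_left[symmetric])
  finally show ?thesis using Wnz by simp
qed

end


lemma pderiv_signof[simp]: "pderiv (signof p :: real poly) = 0"
  by (simp add: of_int_poly)

definition rowd :: "real poly mat \<Rightarrow> nat \<Rightarrow> real poly mat" where
  "rowd R j = mat (dim_row R) (dim_col R) (\<lambda>(i,l). if i = j then pderiv (R $$ (i,l)) else R $$ (i,l))"

lemma det_rowd:
  assumes R: "R \<in> carrier_mat n n" and j: "j < n"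
  shows "det (rowd R j) = (\<Sum>p\<in>{p. p permutes {0..<n}}. signof p * ((\<Prod>i\<in>{0..<n}-{j}. R $$ (i, p i)) * pderiv (R $$ (j, p j))))"
proof -
  have rc: "rowd R j \<in> carrier_mat n n" using R unfolding rowd_def by auto
  show ?thesis unfolding det_def'[OF rc]
  proof (intro sum.cong refl)
    fix p assume "p \<in> {p. p permutes {0..<n}}"
    then have pp: "p permutes {0..<n}" by simp
    have pi: "\<And>i. i < n \<Longrightarrow> p i < n" using permutes_in_image[OF pp] by auto
    have "(\<Prod>i = 0..<n. rowd R j $$ (i, p i)) = (\<Prod>i = 0..<n. if i = j then pderiv (R $$ (i, p i)) else R $$ (i, p i))"
      by (intro prod.cong refl) (use R pi in \<open>auto simp: rowd_def\<close>)
    also have "\<dots> = (if j = j then pderiv (R $$ (j, p j)) else R $$ (j, p j)) * (\<Prod>i\<in>{0..<n}-{j}. if i = j then pderiv (R $$ (i, p i)) else R $$ (i, p i))"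
      by (rule prod.remove) (use j in auto)
    also have "\<dots> = (\<Prod>i\<in>{0..<n}-{j}. R $$ (i, p i)) * pderiv (R $$ (j, p j))"
      by (simp add: mult.commute)
    finally show "signof p * (\<Prod>i = 0..<n. rowd R j $$ (i, p i)) = signof p * ((\<Prod>i\<in>{0..<n}-{j}. R $$ (i, p i)) * pderiv (R $$ (j, p j)))"
      by simp
  qed
qed

lemma det_rowd_cof:
  assumes R: "R \<in> carrier_mat n n" and j: "j < n"
  shows "det (rowd R j) = (\<Sum>l<n. pderiv (R $$ (j,l)) * cofactor R j l)"
proof -
  have rc: "rowd R j \<in> carrier_mat n n" using R unfolding rowd_def by auto
  have "det (rowd R j) = (\<Sum>l<n. rowd R j $$ (j,l) * cofactor (rowd R j) j l)"
    by (rule laplace_expansion_row[OF rc j])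
  also have "\<dots> = (\<Sum>l<n. pderiv (R $$ (j,l)) * cofactor R j l)"
  proof (intro sum.cong refl)
    fix l assume l: "l \<in> {..<n}"
    have md: "mat_delete (rowd R j) j l = mat_delete R j l"
      using R j l unfolding mat_delete_def rowd_def by (intro eq_matI) auto
    show "rowd R j $$ (j,l) * cofactor (rowd R j) j l = pderiv (R $$ (j,l)) * cofactor R j l"
      unfolding cofactor_def md using R j l by (simp add: rowd_def)
  qed
  finally show ?thesis .
qed

lemma jacobi:
  assumes R: "(R :: real poly mat) \<in> carrier_mat n n"
  shows "pderiv (det R) = (\<Sum>a<n. \<Sum>b<n. adj_mat R $$ (b,a) * pderiv (R $$ (a,b)))"
proof -
  have "pderiv (det R) = (\<Sum>p\<in>{p. p permutes {0..<n}}. signof p * pderiv (\<Prod>i = 0..<n. R $$ (i, p i)))"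
    unfolding det_def'[OF R] by (simp add: pderiv_sum' pderiv_mult)
  also have "\<dots> = (\<Sum>p\<in>{p. p permutes {0..<n}}. \<Sum>j\<in>{0..<n}. signof p * ((\<Prod>i\<in>{0..<n}-{j}. R $$ (i, p i)) * pderiv (R $$ (j, p j))))"
    by (simp add: pderiv_prod sum_distrib_left)
  also have "\<dots> = (\<Sum>j\<in>{0..<n}. \<Sum>p\<in>{p. p permutes {0..<n}}. signof p * ((\<Prod>i\<in>{0..<n}-{j}. R $$ (i, p i)) * pderiv (R $$ (j, p j))))"
    by (rule sum.swap)
  also have "\<dots> = (\<Sum>j\<in>{0..<n}. det (rowd R j))"
    by (intro sum.cong refl) (simp add: det_rowd[OF R])
  also have "\<dots> = (\<Sum>j<n. \<Sum>l<n. pderiv (R $$ (j,l)) * cofactor R j l)"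
    by (simp add: atLeast0LessThan det_rowd_cof[OF R])
  also have "\<dots> = (\<Sum>a<n. \<Sum>b<n. adj_mat R $$ (b,a) * pderiv (R $$ (a,b)))"
    using R by (intro sum.cong refl) (auto simp: adj_mat_def mult.commute)
  finally show ?thesis .
qed

lemma pderiv_antideriv: "pderiv (poly_antideriv X) = X"
proof -
  have "pderiv (poly_antideriv X) = (\<Sum>j\<le>degree X. monom (coeff X j) j)"
    unfolding poly_antideriv_def pderiv_sum' pderiv_monom
    by (intro sum.cong refl) (simp add: field_simps del: of_nat_Suc)
  also have "\<dots> = X" by (rule poly_as_sum_of_monoms)
  finally show ?thesis .
qed

lemma rho_deriv: "pderiv (rho k i j) = gegenbauer (real k + 1/2) i * gegenbauer (real k + 1/2) j * weight k"
  unfolding rho_def Let_def by (simp add: pderiv_diff pderiv_antideriv)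

lemma rho_m1: "poly (rho k i j) (-1) = 0"
  unfolding rho_def Let_def by simp

lemma rho_sym: "rho k i j = rho k j i"
  unfolding rho_def Let_def by (simp add: mult_ac)

lemma weight_deriv: "[:1,0,-1:] * pderiv (weight k) = - smult (2 * real k) ([:0,1:] * weight k)"
proof (cases k)
  case 0 then show ?thesis by (simp add: weight_def)
next
  case (Suc m)
  have "pderiv (weight k) = smult (real (Suc m)) ([:1,0,-1:] ^ m) * [:0,-2:]"
    unfolding weight_def Suc pderiv_power_Suc by (simp add: pderiv_pCons)
  then show ?thesis unfolding weight_def Suc by (simp add: algebra_simps)
qed

lemma eq_by_deriv: "pderiv f = pderiv g \<Longrightarrow> poly f x = poly g x \<Longrightarrow> f = (g :: real poly)"
proof -
  assume d: "pderiv f = pderiv g" and v: "poly f x = poly g x"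
  have "pderiv (f - g) = 0" using d by (simp add: pderiv_diff)
  then obtain h where h: "f - g = [:h:]" using pderiv_iszero by blast
  then have "h = 0" using v by (metis diff_self poly_0 poly_diff poly_pCons mult_zero_right add.right_neutral)
  then show ?thesis using h by simp
qed

lemma geg_ode2:
  fixes k i :: nat
  defines "\<alpha> \<equiv> real k + 1/2"
  shows "pderiv ([:1,0,-1:] * weight k * pderiv (gegenbauer \<alpha> i)) = smult (- real i * (2*\<alpha> + real i)) (weight k * gegenbauer \<alpha> i)"
proof -
  define C where "C = gegenbauer \<alpha> i"
  define W where "W = weight k"
  have o: "pderiv (pderiv C) - [:0,1:] * ([:0,1:] * pderiv (pderiv C)) - smult (2*\<alpha>+1) ([:0,1:] * pderiv C) = smult (- real i * (2*\<alpha> + real i)) C"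
    unfolding C_def by (rule geg_ode) (simp add: \<alpha>_def)
  have u: "[:1,0,-1:] * pderiv (pderiv C) = pderiv (pderiv C) - [:0,1:] * ([:0,1:] * pderiv (pderiv C))" by simp
  have w: "[:1,0,-1:] * pderiv W = - smult (2 * real k) ([:0,1:] * W)" unfolding W_def by (rule weight_deriv)
  have "pderiv ([:1,0,-1:] * W * pderiv C) = pderiv [:1,0,-1:] * W * pderiv C + ([:1,0,-1:] * pderiv W) * pderiv C + W * ([:1,0,-1:] * pderiv (pderiv C))"
  proof -
    have aux: "\<And>a b c. pderiv (a*b*c) = pderiv a * b * c + (a * pderiv b) * c + b * (a * pderiv (c::real poly))"
      by (simp add: pderiv_mult algebra_simps)
    show ?thesis by (rule aux)
  qed
  also have "\<dots> = pderiv [:1,0,-1:] * W * pderiv C - smult (2 * real k) ([:0,1:] * W) * pderiv C + W * (smult (- real i * (2*\<alpha> + real i)) C + smult (2*\<alpha>+1) ([:0,1:] * pderiv C))"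
  proof -
    have u2: "[:1,0,-1:] * pderiv (pderiv C) = smult (- real i * (2*\<alpha> + real i)) C + smult (2*\<alpha>+1) ([:0,1:] * pderiv C)"
      using o u by (metis diff_eq_eq)
    show ?thesis unfolding w u2 by simp
  qed
  also have "\<dots> = smult (- real i * (2*\<alpha> + real i)) (W * C)"
    by (simp add: pderiv_pCons \<alpha>_def algebra_simps) (simp add: smult_add_left[symmetric])
  finally show ?thesis unfolding C_def W_def .
qed

lemma rho_comm:
  fixes k i j :: nat
  defines "\<alpha> \<equiv> real k + 1/2"
  shows "smult ((- real i * (2*\<alpha> + real i)) - (- real j * (2*\<alpha> + real j))) (rho k i j)
    = ([:1,0,-1:] * weight k) * (pderiv (gegenbauer \<alpha> i) * gegenbauer \<alpha> j - gegenbauer \<alpha> i * pderiv (gegenbauer \<alpha> j))"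
proof (rule eq_by_deriv[where x = "-1"])
  let ?Ci = "gegenbauer \<alpha> i" and ?Cj = "gegenbauer \<alpha> j" and ?W = "weight k"
  let ?li = "- real i * (2*\<alpha> + real i)" and ?lj = "- real j * (2*\<alpha> + real j)"
  have oi: "pderiv ([:1,0,-1:] * ?W * pderiv ?Ci) = smult ?li (?W * ?Ci)" unfolding \<alpha>_def by (rule geg_ode2)
  have oj: "pderiv ([:1,0,-1:] * ?W * pderiv ?Cj) = smult ?lj (?W * ?Cj)" unfolding \<alpha>_def by (rule geg_ode2)
  have e: "([:1,0,-1:] * ?W) * (pderiv ?Ci * ?Cj - ?Ci * pderiv ?Cj) = ([:1,0,-1:] * ?W * pderiv ?Ci) * ?Cj - ?Ci * ([:1,0,-1:] * ?W * pderiv ?Cj)"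
    by (simp add: algebra_simps)
  have pd: "\<And>a b c d :: real poly. pderiv (a * b - c * d) = pderiv a * b + a * pderiv b - (pderiv c * d + c * pderiv d)"
    by (simp add: pderiv_diff pderiv_mult algebra_simps)
  have "pderiv (([:1,0,-1:] * ?W) * (pderiv ?Ci * ?Cj - ?Ci * pderiv ?Cj))
     = pderiv ([:1,0,-1:] * ?W * pderiv ?Ci) * ?Cj + ([:1,0,-1:] * ?W * pderiv ?Ci) * pderiv ?Cj
       - (pderiv ?Ci * ([:1,0,-1:] * ?W * pderiv ?Cj) + ?Ci * pderiv ([:1,0,-1:] * ?W * pderiv ?Cj))"
    unfolding e by (rule pd)
  also have "\<dots> = smult (?li - ?lj) (?Ci * ?Cj * ?W)" unfolding oi oj by (simp add: algebra_simps) (simp add: smult_add_left[symmetric])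
  finally show "pderiv (smult (?li - ?lj) (rho k i j)) = pderiv (([:1,0,-1:] * ?W) * (pderiv ?Ci * ?Cj - ?Ci * pderiv ?Cj))"
    by (simp add: pderiv_smult rho_deriv \<alpha>_def)
  show "poly (smult (?li - ?lj) (rho k i j)) (-1) = poly (([:1,0,-1:] * ?W) * (pderiv ?Ci * ?Cj - ?Ci * pderiv ?Cj)) (-1)"
    by (simp add: rho_m1)
qed

lemma adj_entries:
  assumes R: "R \<in> carrier_mat n n" and a: "a<n" and b: "b<n"
  shows "(\<Sum>c<n. R $$ (a,c) * adj_mat R $$ (c,b)) = (if a=b then det R else 0)"
    and "(\<Sum>c<n. adj_mat R $$ (a,c) * R $$ (c,b)) = (if a=b then det R else 0)"
proof -
  have A: "adj_mat R \<in> carrier_mat n n" using adj_mat(1)[OF R] .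
  have "(R * adj_mat R) $$ (a,b) = (det R \<cdot>\<^sub>m 1\<^sub>m n) $$ (a,b)" using adj_mat(2)[OF R] by simp
  then show "(\<Sum>c<n. R $$ (a,c) * adj_mat R $$ (c,b)) = (if a=b then det R else 0)"
    using R A a b by (simp add: scalar_prod_def atLeast0LessThan)
  have "(adj_mat R * R) $$ (a,b) = (det R \<cdot>\<^sub>m 1\<^sub>m n) $$ (a,b)" using adj_mat(3)[OF R] by simp
  then show "(\<Sum>c<n. adj_mat R $$ (a,c) * R $$ (c,b)) = (if a=b then det R else 0)"
    using R A a b by (simp add: scalar_prod_def atLeast0LessThan)
qed

lemma adj_sym:
  fixes R A :: "nat \<Rightarrow> nat \<Rightarrow> 'x::idom" and tt :: "nat \<Rightarrow> 'x"
  assumes RA: "\<And>a b. a<n \<Longrightarrow> b<n \<Longrightarrow> (\<Sum>c<n. R a c * A c b) = (if a=b then \<tau> else 0)"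
    and AR: "\<And>a b. a<n \<Longrightarrow> b<n \<Longrightarrow> (\<Sum>c<n. A a c * R c b) = (if a=b then \<tau> else 0)"
    and hT: "\<And>c d. c<n \<Longrightarrow> d<n \<Longrightarrow> tt c * R c d = tt d * R d c"
    and tnz: "\<tau> \<noteq> 0" and a: "a<n" and b: "b<n"
  shows "tt a * A a b = tt b * A b a"
proof -
  have 1: "(\<Sum>c<n. \<Sum>d<n. A c a * (tt c * R c d) * A d b) = \<tau> * (tt b * A b a)"
  proof -
    have "(\<Sum>c<n. \<Sum>d<n. A c a * (tt c * R c d) * A d b) = (\<Sum>c<n. A c a * tt c * (\<Sum>d<n. R c d * A d b))"
      by (simp add: sum_distrib_left mult_ac)
    also have "\<dots> = (\<Sum>c<n. A c a * tt c * (if c = b then \<tau> else 0))"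
      by (intro sum.cong refl) (simp add: RA b)
    also have "\<dots> = \<tau> * (tt b * A b a)" by (subst sum_delta_r[OF b]) (simp add: mult_ac)
    finally show ?thesis .
  qed
  have 2: "(\<Sum>c<n. \<Sum>d<n. A c a * (tt d * R d c) * A d b) = \<tau> * (tt a * A a b)"
  proof -
    have "(\<Sum>c<n. \<Sum>d<n. A c a * (tt d * R d c) * A d b) = (\<Sum>d<n. \<Sum>c<n. A c a * (tt d * R d c) * A d b)"
      by (rule sum.swap)
    also have "\<dots> = (\<Sum>d<n. tt d * A d b * (\<Sum>c<n. R d c * A c a))"
      by (simp add: sum_distrib_left mult_ac)
    also have "\<dots> = (\<Sum>d<n. tt d * A d b * (if d = a then \<tau> else 0))"
      by (intro sum.cong refl) (simp add: RA a)
    also have "\<dots> = \<tau> * (tt a * A a b)" by (subst sum_delta_r[OF a]) (simp add: mult_ac)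
    finally show ?thesis .
  qed
  have "(\<Sum>c<n. \<Sum>d<n. A c a * (tt c * R c d) * A d b) = (\<Sum>c<n. \<Sum>d<n. A c a * (tt d * R d c) * A d b)"
    by (intro sum.cong refl) (simp add: hT)
  then have "\<tau> * (tt b * A b a) = \<tau> * (tt a * A a b)" using 1 2 by simp
  then show ?thesis using tnz by simp
qed

lemma Rmat_carrier: "Rmat k ms ps \<in> carrier_mat (length ms) (length ms)"
  unfolding Rmat_def by simp

lemma Rmat_index: "a < length ms \<Longrightarrow> b < length ms \<Longrightarrow>
   Rmat k ms ps $$ (a,b) = (if a = b then 1 else 0) + smult (ps ! b) (rho k (ms ! a) (ms ! b))"
  unfolding Rmat_def by simp

lemma Qvec_index: assumes e: "e < length ms" shows "Qvec k ms ps $ e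
   = (\<Sum>b<length ms. adj_mat (Rmat k ms ps) $$ (e,b) * gegenbauer (real k + 1/2) (ms ! b))"
proof -
  have A: "adj_mat (Rmat k ms ps) \<in> carrier_mat (length ms) (length ms)" by (rule adj_mat(1)[OF Rmat_carrier])
  show ?thesis unfolding Qvec_def using A e
    by (simp add: scalar_prod_def atLeast0LessThan)
qed

lemma weight_nz: "weight k \<noteq> 0"
  unfolding weight_def by simp

lemma system_eigen:
  fixes k :: nat and ms :: "nat list" and ps :: "real list"
  defines "\<alpha> \<equiv> real k + 1/2"
  assumes tnz: "det (Rmat k ms ps) \<noteq> 0" and e: "e < length ms"
  shows "Nop (det (Rmat k ms ps)) \<alpha> (Qvec k ms ps $ e)
     = [:- real (ms!e) * (2*\<alpha> + real (ms!e)):] * det (Rmat k ms ps) * Qvec k ms ps $ e"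
proof -
  define n where "n = length ms"
  define Rm where "Rm = Rmat k ms ps"
  have Rc: "Rm \<in> carrier_mat n n" unfolding Rm_def n_def by (rule Rmat_carrier)
  define lam where "lam = (\<lambda>i::nat. - real i * (2*\<alpha> + real i))"
  interpret c: core n "\<lambda>a b. Rm $$ (a,b)" "\<lambda>a b. adj_mat Rm $$ (a,b)" "det Rm" "weight k" "[:1,0,-1:] * weight k"
    "\<lambda>a. gegenbauer \<alpha> (ms ! a)" "\<lambda>b. [:ps ! b:]" "\<lambda>a. [:lam (ms ! a):]"
  proof
    fix a b assume a: "a<n" and b: "b<n"
    show "(\<Sum>c<n. Rm $$ (a, c) * adj_mat Rm $$ (c, b)) = (if a = b then det Rm else 0)"
      by (rule adj_entries(1)[OF Rc a b])
    show "(\<Sum>c<n. adj_mat Rm $$ (a, c) * Rm $$ (c, b)) = (if a = b then det Rm else 0)"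
      by (rule adj_entries(2)[OF Rc a b])
    show "pderiv (Rm $$ (a, b)) = [:ps ! b:] * weight k * gegenbauer \<alpha> (ms ! a) * gegenbauer \<alpha> (ms ! b)"
      using a b unfolding Rm_def n_def by (simp add: Rmat_index pderiv_add pderiv_smult rho_deriv \<alpha>_def mult_ac)
    show "([:lam (ms ! a):] - [:lam (ms ! b):]) * Rm $$ (a, b) =
      [:ps ! b:] * ([:1, 0, - 1:] * weight k) * (pderiv (gegenbauer \<alpha> (ms ! a)) * gegenbauer \<alpha> (ms ! b) - gegenbauer \<alpha> (ms ! a) * pderiv (gegenbauer \<alpha> (ms ! b)))"
    proof (cases "a = b")
      case True then show ?thesis by simp
    next
      case False
      have "([:lam (ms ! a):] - [:lam (ms ! b):]) * Rm $$ (a, b) = smult (ps ! b) (smult (lam (ms ! a) - lam (ms ! b)) (rho k (ms ! a) (ms ! b)))"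
        using a b False unfolding Rm_def n_def by (simp add: Rmat_index)
      also have "\<dots> = smult (ps ! b) (([:1,0,-1:] * weight k) * (pderiv (gegenbauer \<alpha> (ms ! a)) * gegenbauer \<alpha> (ms ! b) - gegenbauer \<alpha> (ms ! a) * pderiv (gegenbauer \<alpha> (ms ! b))))"
        unfolding lam_def \<alpha>_def rho_comm ..
      finally show ?thesis by simp
    qed
    have hT: "\<And>c d. c<n \<Longrightarrow> d<n \<Longrightarrow> [:ps ! c:] * Rm $$ (c,d) = [:ps ! d:] * Rm $$ (d,c)"
      unfolding Rm_def n_def by (auto simp: Rmat_index rho_sym mult.commute)
    show "[:ps ! a:] * adj_mat Rm $$ (a, b) = [:ps ! b:] * adj_mat Rm $$ (b, a)"
      by (rule adj_sym[where R = "\<lambda>a b. Rm $$ (a,b)" and \<tau> = "det Rm"]) (use adj_entries[OF Rc] hT tnz a b in \<open>auto simp: Rm_def n_def\<close>)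
  next
    fix a assume a: "a<n"
    show "pderiv ([:1, 0, - 1:] * weight k * pderiv (gegenbauer \<alpha> (ms ! a))) = [:lam (ms ! a):] * weight k * gegenbauer \<alpha> (ms ! a)"
      unfolding \<alpha>_def lam_def geg_ode2 by simp
  next
    show "pderiv (det Rm) = (\<Sum>a<n. \<Sum>b<n. adj_mat Rm $$ (b, a) * pderiv (Rm $$ (a, b)))"
      by (rule jacobi[OF Rc])
  qed (use tnz in \<open>auto simp: Rm_def\<close>)
  have hW: "[:1,0,-1:] * pderiv (weight k) = - smult (2*\<alpha>-1) ([:0,1:] * weight k)"
    unfolding weight_deriv \<alpha>_def by simp
  have "Nop (det Rm) \<alpha> (c.Q e) = [:lam (ms ! e):] * det Rm * c.Q e"
    by (rule c.main_eq[OF _ refl hW weight_nz]) (use e in \<open>simp add: n_def\<close>)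
  moreover have "c.Q e = Qvec k ms ps $ e"
    unfolding c.Q_def unfolding Qvec_index[OF e] Rm_def n_def \<alpha>_def ..
  ultimately show ?thesis unfolding Rm_def lam_def by simp
qed



lemma eval_hom: "comm_ring_hom (\<lambda>q::real poly. poly q (x::real))"
  by unfold_locales simp_all

lemma poly_det: fixes M :: "real poly mat" and x :: real shows "poly (det M) x = det (map_mat (\<lambda>q. poly q x) M)"
proof -
  interpret ev: comm_ring_hom "\<lambda>q::real poly. poly q x" by (rule eval_hom)
  show ?thesis by simp
qed

lemma poly_adj:
  fixes M :: "real poly mat" and x :: real
  assumes M: "M \<in> carrier_mat n n" and a: "a < n" and b: "b < n"
  shows "poly (adj_mat M $$ (a,b)) x = adj_mat (map_mat (\<lambda>q. poly q x) M) $$ (a,b)"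
proof -
  have md: "map_mat (\<lambda>q. poly q x) (mat_delete M b a) = mat_delete (map_mat (\<lambda>q. poly q x) M) b a"
    using M a b unfolding mat_delete_def by (intro eq_matI) auto
  show ?thesis using M a b unfolding adj_mat_def cofactor_def
    by (simp add: poly_det md)
qed

lemma adj_one: "adj_mat (1\<^sub>m n :: 'a :: comm_ring_1 mat) = 1\<^sub>m n"
proof -
  have c: "adj_mat (1\<^sub>m n :: 'a mat) \<in> carrier_mat n n" by (rule adj_mat(1)) simp
  have "1\<^sub>m n * adj_mat (1\<^sub>m n :: 'a mat) = det (1\<^sub>m n :: 'a mat) \<cdot>\<^sub>m 1\<^sub>m n" by (rule adj_mat(2)) simp
  moreover have "1 \<cdot>\<^sub>m 1\<^sub>m n = (1\<^sub>m n :: 'a mat)" by (intro eq_matI) auto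
  ultimately show ?thesis using c by simp
qed

lemma Rmat_m1: "map_mat (\<lambda>q. poly q (-1)) (Rmat k ms ps) = 1\<^sub>m (length ms)"
  unfolding Rmat_def by (intro eq_matI) (auto simp: rho_m1)

lemma tau_m1: "poly (det (Rmat k ms ps)) (-1) = 1"
  unfolding poly_det Rmat_m1 by simp

lemma tau_nz: "det (Rmat k ms ps) \<noteq> 0"
  using tau_m1[of k ms ps] by auto

lemma Qvec_m1: assumes e: "e < length ms"
  shows "poly (Qvec k ms ps $ e) (-1) = poly (gegenbauer (real k + 1/2) (ms ! e)) (-1)"
proof -
  have "poly (Qvec k ms ps $ e) (-1) = (\<Sum>b<length ms. poly (adj_mat (Rmat k ms ps) $$ (e,b)) (-1) * poly (gegenbauer (real k + 1/2) (ms ! b)) (-1))"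
    unfolding Qvec_index[OF e] by (simp add: poly_sum)
  also have "\<dots> = (\<Sum>b<length ms. (if e = b then 1 else 0) * poly (gegenbauer (real k + 1/2) (ms ! b)) (-1))"
    by (intro sum.cong refl) (simp add: poly_adj[OF Rmat_carrier e] Rmat_m1 adj_one e)
  also have "\<dots> = poly (gegenbauer (real k + 1/2) (ms ! e)) (-1)" by (subst sum_delta_l[OF e]) simp
  finally show ?thesis .
qed

lemma xgeg_s:
  assumes len: "length ps = length ms"
  shows "xgegenbauer k ms ps s i = xgegenbauer k ms ps 0 i"
proof -
  let ?n = "length ms"
  let ?R = "\<lambda>s. Rmat k (ms @ [i]) (ps @ [s])"
  have e: "?n < length (ms @ [i])" by simp
  have "\<And>b. b < Suc ?n \<Longrightarrow> mat_delete (?R s) b ?n = mat_delete (?R 0) b ?n"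
    unfolding mat_delete_def Rmat_def using len by (intro eq_matI) (auto simp: nth_append)
  then have "\<And>b. b < Suc ?n \<Longrightarrow> adj_mat (?R s) $$ (?n, b) = adj_mat (?R 0) $$ (?n, b)"
    unfolding adj_mat_def cofactor_def Rmat_def by simp
  then show ?thesis unfolding xgegenbauer_def Qvec_index[OF e] by simp
qed

lemma tau_ext:
  assumes len: "length ps = length ms"
  shows "det (Rmat k (ms @ [i]) (ps @ [0])) = det (Rmat k ms ps)"
proof -
  let ?n = "length ms"
  let ?R = "Rmat k (ms @ [i]) (ps @ [0])"
  have Rc: "?R \<in> carrier_mat (Suc ?n) (Suc ?n)" using Rmat_carrier[of k "ms @ [i]" "ps @ [0]"] by simp
  have "det ?R = (\<Sum>a<Suc ?n. ?R $$ (a, ?n) * cofactor ?R a ?n)"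
    by (rule laplace_expansion_column[OF Rc]) simp
  also have "\<dots> = (\<Sum>a<Suc ?n. (if ?n = a then 1 else 0) * cofactor ?R a ?n)"
    by (intro sum.cong refl) (use len in \<open>auto simp: Rmat_def nth_append\<close>)
  also have "\<dots> = cofactor ?R ?n ?n" by (subst sum_delta_l) auto
  also have "\<dots> = det (mat_delete ?R ?n ?n)" unfolding cofactor_def by simp
  also have "mat_delete ?R ?n ?n = Rmat k ms ps"
    unfolding mat_delete_def Rmat_def using len by (intro eq_matI) (auto simp: nth_append)
  finally show ?thesis .
qed

lemma gop_Nop: "poly \<tau> z \<noteq> 0 \<Longrightarrow> gop \<alpha> \<tau> y z = poly (Nop \<tau> \<alpha> y) z / poly \<tau> z"
  unfolding gop_def Nop_def by (simp add: field_simps power2_eq_square)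

lemma eigen_of_Nop:
  assumes "Nop \<tau> \<alpha> y = [:lam:] * \<tau> * y"
  shows "is_eigenfunction \<alpha> \<tau> y lam"
  unfolding is_eigenfunction_def using assms by (auto simp: gop_Nop)

lemma ode_deriv_aux:
  fixes z Y1 Y2 Y3 :: "real poly"
  assumes dz: "pderiv z = 1" and h: "Y3 - pderiv (z*(z*Y2)) - smult c (pderiv (z*Y1)) = smult \<mu> Y1"
    and d2: "pderiv Y2 = Y3" and d1: "pderiv Y1 = Y2"
  shows "Y3 - z*(z*Y3) - smult (c+2) (z*Y2) = smult (\<mu>+c) Y1"
proof -
  have h2: "Y3 - (z*Y2 + z*(Y2 + z*Y3)) - (smult c Y1 + smult c (z*Y2)) = smult \<mu> Y1"
    using h unfolding pderiv_mult dz d2 d1 by (simp add: algebra_simps smult_add_right)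
  have t: "smult (c+2) (z*Y2) = smult c (z*Y2) + z*Y2 + z*Y2"
  proof -
    have "c + 2 = c + 1 + 1" by simp
    then show ?thesis by (simp only: smult_add_left) simp
  qed
  show ?thesis unfolding t unfolding smult_add_left using h2 by (simp add: algebra_simps)
qed

lemma ode_m1:
  fixes y :: "real poly"
  assumes "y \<noteq> 0" "\<beta> \<ge> 0"
    "pderiv (pderiv y) - [:0,1:] * ([:0,1:] * pderiv (pderiv y)) - smult (2*\<beta>+1) ([:0,1:] * pderiv y) = smult \<mu> y"
  shows "poly y (-1) \<noteq> 0"
  using assms
proof (induction "degree y" arbitrary: y \<beta> \<mu> rule: less_induct)
  case less
  show ?case
  proof (cases "degree y = 0")
    case True
    then obtain c where "y = [:c:]" using degree_eq_zeroE by blast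
    then show ?thesis using less.prems by simp
  next
    case False
    show ?thesis
    proof
      assume y0: "poly y (-1) = 0"
      have "poly (pderiv (pderiv y) - [:0,1:] * ([:0,1:] * pderiv (pderiv y)) - smult (2*\<beta>+1) ([:0,1:] * pderiv y)) (-1) = poly (smult \<mu> y) (-1)"
        using less.prems(3) by simp
      then have "(2*\<beta>+1) * poly (pderiv y) (-1) = 0" using y0 by simp
      then have d0: "poly (pderiv y) (-1) = 0" using less.prems(2) by simp
      have dnz: "pderiv y \<noteq> 0" using False by (simp add: pderiv_eq_0_iff)
      have dlt: "degree (pderiv y) < degree y" using False by (simp add: degree_pderiv)
      have "pderiv (pderiv (pderiv y) - [:0,1:] * ([:0,1:] * pderiv (pderiv y)) - smult (2*\<beta>+1) ([:0,1:] * pderiv y)) = pderiv (smult \<mu> y)"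
        by (rule arg_cong[where f = pderiv, OF less.prems(3)])
      then have hD: "pderiv (pderiv (pderiv y)) - pderiv ([:0,1:] * ([:0,1:] * pderiv (pderiv y))) - smult (2*\<beta>+1) (pderiv ([:0,1:] * pderiv y)) = smult \<mu> (pderiv y)"
        by (simp only: pderiv_diff pderiv_smult)
      have ode': "pderiv (pderiv (pderiv y)) - [:0,1:] * ([:0,1:] * pderiv (pderiv (pderiv y))) - smult (2*(\<beta>+1)+1) ([:0,1:] * pderiv (pderiv y)) = smult (\<mu> + (2*\<beta>+1)) (pderiv y)"
      proof -
        have "2*(\<beta>+1)+1 = 2*\<beta>+1+2" by simp
        then show ?thesis using ode_deriv_aux[OF _ hD refl refl] by (simp add: pderiv_pCons)
      qed
      have "0 \<le> \<beta> + 1" using less.prems(2) by simp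
      from less.hyps[OF dlt dnz this ode'] have "poly (pderiv y) (-1) \<noteq> 0" .
      then show False using d0 by simp
    qed
  qed
qed

lemma geg_nz: assumes "\<alpha> > 0" shows "gegenbauer \<alpha> i \<noteq> 0"
proof -
  have "coeff (gegenbauer \<alpha> i) i = gc \<alpha> i 0" unfolding coeff_geg by simp
  also have "\<dots> \<noteq> 0" unfolding gc_def using assms
    by (auto simp: Gamma_eq_zero_iff dest!: nonpos_Ints_nonpos)
  finally show ?thesis by auto
qed

lemma geg_m1: assumes "\<alpha> > 0" shows "poly (gegenbauer \<alpha> i) (-1) \<noteq> 0"
  by (rule ode_m1[OF geg_nz[OF assms] _ geg_ode[OF assms]]) (use assms in simp)

lemma coeff_mult_bound:
  fixes f g :: "real poly"
  assumes f: "degree f \<le> a" and g: "degree g \<le> b"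
  shows "coeff (f * g) (a + b) = coeff f a * coeff g b"
proof -
  have "coeff (f * g) (a + b) = (\<Sum>i\<le>a+b. coeff f i * coeff g (a + b - i))" by (rule coeff_mult)
  also have "\<dots> = (\<Sum>i\<le>a+b. if i = a then coeff f a * coeff g b else 0)"
  proof (intro sum.cong refl)
    fix i assume "i \<in> {..a+b}"
    show "coeff f i * coeff g (a + b - i) = (if i = a then coeff f a * coeff g b else 0)"
    proof (cases "i = a")
      case False
      show ?thesis
      proof (cases "i < a")
        case True then have "coeff g (a + b - i) = 0" using g by (intro coeff_eq_0) auto
        then show ?thesis using False by simp
      next
        case False': False
        then have "coeff f i = 0" using f False by (intro coeff_eq_0) auto
        then show ?thesis using False by simp
      qed
    qed simp
  qed
  also have "\<dots> = coeff f a * coeff g b" by simp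
  finally show ?thesis .
qed

lemma deg_zD: "degree ([:0,1:] * pderiv p) \<le> degree (p::real poly)"
proof (cases "degree p = 0")
  case True then have "pderiv p = 0" by (simp add: pderiv_eq_0_iff)
  then show ?thesis by simp
next
  case False
  have "degree ([:0,1:] * pderiv p) \<le> degree [:0,1::real:] + degree (pderiv p)" by (rule degree_mult_le)
  also have "\<dots> = degree p" using False by (simp add: degree_pderiv)
  finally show ?thesis .
qed

lemma deg_zzDD: "degree ([:0,1:] * ([:0,1:] * pderiv (pderiv p))) \<le> degree (p::real poly)"
proof (cases "degree p = 0")
  case True then have "pderiv p = 0" by (simp add: pderiv_eq_0_iff)
  then show ?thesis by simp
next
  case False
  have "degree ([:0,1:] * ([:0,1:] * pderiv (pderiv p))) \<le> degree [:0,1::real:] + degree ([:0,1:] * pderiv (pderiv p))" by (rule degree_mult_le)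
  also have "\<dots> \<le> 1 + degree (pderiv p)" using deg_zD[of "pderiv p"] by simp
  also have "\<dots> = degree p" using False by (simp add: degree_pderiv)
  finally show ?thesis .
qed

lemma deg_D: "degree (pderiv p) \<le> degree (p::real poly)" by (simp add: degree_pderiv)

lemma coeff_D_top: "coeff (pderiv p) (degree p) = (0::real)"
  by (simp add: coeff_pderiv coeff_eq_0)

lemma Nop_alt: fixes \<alpha> :: real shows "Nop \<tau> \<alpha> y = \<tau> * pderiv (pderiv y) - 2 * (pderiv \<tau> * pderiv y) + pderiv (pderiv \<tau>) * y
   - \<tau> * ([:0,1:] * ([:0,1:] * pderiv (pderiv y))) + 2 * (([:0,1:] * pderiv \<tau>) * ([:0,1:] * pderiv y))
   - ([:0,1:] * ([:0,1:] * pderiv (pderiv \<tau>))) * y - smult (2*\<alpha>+1) (\<tau> * ([:0,1:] * pderiv y))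
   + smult (2*\<alpha>-1) (([:0,1:] * pderiv \<tau>) * y)"
proof -
  have u: "\<And>X. [:1,0,-1::real:] * X = X - [:0,1:] * ([:0,1:] * X)" by simp
  show ?thesis unfolding Nop_def u by (simp add: algebra_simps)
qed

lemma coeff_DD_top: "coeff (pderiv (pderiv p)) (degree p) = (0::real)"
proof -
  have "degree (pderiv p) < Suc (degree p)" using deg_D[of p] by simp
  then show ?thesis by (simp add: coeff_pderiv coeff_eq_0)
qed

lemma deg_DD: "degree (pderiv (pderiv p)) \<le> degree (p::real poly)"
  using deg_D[of p] deg_D[of "pderiv p"] by simp

lemma Nop_lead:
  fixes \<tau> y :: "real poly" and \<alpha> :: real
  shows "coeff (Nop \<tau> \<alpha> y) (degree y + degree \<tau>) = coeff \<tau> (degree \<tau>) * coeff y (degree y) *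
    (- ((real (degree y) - real (degree \<tau>))^2) - 2*\<alpha>*(real (degree y) - real (degree \<tau>)))"
proof -
  define d e where "d = degree y" "e = degree \<tau>"
  have de: "d + e = e + d" by simp
  have bt: "degree \<tau> \<le> e" "degree y \<le> d" unfolding d_e_def by simp_all
  have dy: "degree (pderiv (pderiv y)) \<le> d" "degree ([:0,1:] * ([:0,1:] * pderiv (pderiv y))) \<le> d"
     "degree (pderiv y) \<le> d" "degree ([:0,1:] * pderiv y) \<le> d"
    unfolding d_e_def by (rule deg_DD deg_zzDD deg_D deg_zD)+
  have dt: "degree (pderiv (pderiv \<tau>)) \<le> e" "degree ([:0,1:] * ([:0,1:] * pderiv (pderiv \<tau>))) \<le> e"
     "degree (pderiv \<tau>) \<le> e" "degree ([:0,1:] * pderiv \<tau>) \<le> e"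
    unfolding d_e_def by (rule deg_DD deg_zzDD deg_D deg_zD)+
  have z: "coeff (pderiv (pderiv y)) d = 0" "coeff (pderiv \<tau>) e = 0" "coeff (pderiv (pderiv \<tau>)) e = 0"
    unfolding d_e_def by (rule coeff_DD_top coeff_D_top coeff_DD_top)+
  have "coeff (Nop \<tau> \<alpha> y) (d+e) = 0 - 2 * 0 + 0 - coeff \<tau> e * (real d * (real d - 1) * coeff y d)
     + 2 * ((real e * coeff \<tau> e) * (real d * coeff y d)) - (real e * (real e - 1) * coeff \<tau> e) * coeff y d
     - (2*\<alpha>+1) * (coeff \<tau> e * (real d * coeff y d)) + (2*\<alpha>-1) * ((real e * coeff \<tau> e) * coeff y d)"
    unfolding Nop_alt coeff_add coeff_diff coeff_smult numeral_mult_conv_smult de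
      coeff_mult_bound[OF bt(1) dy(1)] coeff_mult_bound[OF dt(3) dy(3)] coeff_mult_bound[OF dt(1) bt(2)]
      coeff_mult_bound[OF bt(1) dy(2)] coeff_mult_bound[OF dt(4) dy(4)] coeff_mult_bound[OF dt(2) bt(2)]
      coeff_mult_bound[OF bt(1) dy(4)] coeff_mult_bound[OF dt(4) bt(2)]
      coeff_x2_pderiv2 coeff_x_pderiv z
    by simp
  also have "\<dots> = coeff \<tau> e * coeff y d * (- ((real d - real e)^2) - 2*\<alpha>*(real d - real e))"
    by (simp add: algebra_simps power2_eq_square)
  finally show ?thesis unfolding d_e_def .
qed

lemma eigen_degree:
  fixes \<tau> y :: "real poly" and \<alpha> :: real
  assumes tnz: "\<tau> \<noteq> 0" and ynz: "y \<noteq> 0" and eq: "Nop \<tau> \<alpha> y = [:lam:] * \<tau> * y"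
  shows "lam = - ((real (degree y) - real (degree \<tau>))^2) - 2*\<alpha>*(real (degree y) - real (degree \<tau>))"
proof -
  have c: "coeff (\<tau> * y) (degree y + degree \<tau>) = coeff \<tau> (degree \<tau>) * coeff y (degree y)"
    using coeff_mult_degree_sum[of \<tau> y] by (simp add: add.commute)
  have L: "coeff (Nop \<tau> \<alpha> y) (degree y + degree \<tau>) = lam * (coeff \<tau> (degree \<tau>) * coeff y (degree y))"
    using c unfolding eq by simp
  have nz: "coeff \<tau> (degree \<tau>) * coeff y (degree y) \<noteq> 0" using tnz ynz by simp
  show ?thesis using L Nop_lead[of \<tau> \<alpha> y] nz by (simp add: mult.commute)
qed

lemma degree_solve:
  fixes d e i :: nat
  assumes a: "\<alpha> > 0" and ie: "i > e"
    and eq: "- real i * (2*\<alpha> + real i) = - ((real d - real e)^2) - 2*\<alpha>*(real d - real e)"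
  shows "d = i + e"
proof -
  define x where "x = real d - real e"
  have "(x - real i) * (x + real i + 2*\<alpha>) = 0" using eq unfolding x_def by (simp add: algebra_simps power2_eq_square)
  moreover have "x + real i + 2*\<alpha> > 0" unfolding x_def using a ie by simp
  ultimately have "x = real i" by simp
  then show ?thesis unfolding x_def by linarith
qed



lemma xgeg_Nop:
  fixes k :: nat and ms :: "nat list" and ps :: "real list"
  defines "\<alpha> \<equiv> real k + 1/2"
  assumes len: "length ps = length ms"
  shows "Nop (tau k ms ps) \<alpha> (xgegenbauer k ms ps s i) = [:- real i * (2*\<alpha> + real i):] * tau k ms ps * xgegenbauer k ms ps s i"
proof -
  have e: "length ms < length (ms @ [i])" by simp
  have "Nop (det (Rmat k (ms @ [i]) (ps @ [0]))) \<alpha> (Qvec k (ms @ [i]) (ps @ [0]) $ length ms)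
     = [:- real ((ms @ [i]) ! length ms) * (2*\<alpha> + real ((ms @ [i]) ! length ms)):] * det (Rmat k (ms @ [i]) (ps @ [0])) * Qvec k (ms @ [i]) (ps @ [0]) $ length ms"
    unfolding \<alpha>_def by (rule system_eigen[OF tau_nz e])
  then show ?thesis unfolding xgeg_s[OF len, of k s i] unfolding xgegenbauer_def tau_ext[OF len] tau_def by simp
qed

lemma xgeg_m1:
  assumes len: "length ps = length ms"
  shows "poly (xgegenbauer k ms ps s i) (-1) \<noteq> 0"
proof -
  have e: "length ms < length (ms @ [i])" by simp
  have "poly (xgegenbauer k ms ps s i) (-1) = poly (gegenbauer (real k + 1/2) i) (-1)"
    unfolding xgeg_s[OF len, of k s i] xgegenbauer_def Qvec_m1[OF e] by simp
  also have "\<dots> \<noteq> 0" by (rule geg_m1) simp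
  finally show ?thesis .
qed

theorem mainTheorem16:
  fixes k :: nat and ms :: "nat list" and t :: "nat \<Rightarrow> real"
  defines "\<alpha> \<equiv> real k + 1/2"
  shows "exceptional_gegenbauer_operator \<alpha> (tau k ms (map t ms))
    \<and> (\<forall>s::real. \<forall>i::nat.
         is_eigenfunction \<alpha> (tau k ms (map t ms)) (xgegenbauer k ms (map t ms) s i)
           (- real i * (2*\<alpha> + real i)))"
proof -
  define ps where "ps = map t ms"
  have len: "length ps = length ms" unfolding ps_def by simp
  define \<tau> where "\<tau> = tau k ms ps"
  have tnz: "\<tau> \<noteq> 0" unfolding \<tau>_def tau_def by (rule tau_nz)
  have NE: "\<And>s i. Nop \<tau> \<alpha> (xgegenbauer k ms ps s i) = [:- real i * (2*\<alpha> + real i):] * \<tau> * xgegenbauer k ms ps s i"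
    unfolding \<tau>_def \<alpha>_def by (rule xgeg_Nop[OF len])
  have B: "\<forall>s::real. \<forall>i::nat. is_eigenfunction \<alpha> \<tau> (xgegenbauer k ms ps s i) (- real i * (2*\<alpha> + real i))"
    using NE eigen_of_Nop by blast
  define E where "E = degree \<tau> + 1"
  define \<pi> where "\<pi> = (\<lambda>j. xgegenbauer k ms ps 0 (E + j))"
  have pnz: "\<And>j. \<pi> j \<noteq> 0" unfolding \<pi>_def using xgeg_m1[OF len] by (metis poly_0)
  have deg: "\<And>j. degree (\<pi> j) = E + j + degree \<tau>"
  proof -
    fix j
    have "- real (E + j) * (2*\<alpha> + real (E + j)) = - ((real (degree (\<pi> j)) - real (degree \<tau>))^2) - 2*\<alpha>*(real (degree (\<pi> j)) - real (degree \<tau>))"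
      by (rule eigen_degree[OF tnz pnz]) (simp add: NE \<pi>_def)
    then show "degree (\<pi> j) = E + j + degree \<tau>"
      by (intro degree_solve[where \<alpha> = \<alpha>]) (auto simp: \<alpha>_def E_def)
  qed
  have A: "exceptional_gegenbauer_operator \<alpha> \<tau>"
    unfolding exceptional_gegenbauer_operator_def
  proof (intro conjI exI[of _ \<pi>])
    show "\<tau> \<noteq> 0" by (rule tnz)
    show "\<forall>j. \<pi> j \<noteq> 0 \<and> (\<exists>lam. is_eigenfunction \<alpha> \<tau> (\<pi> j) lam)"
      using pnz B unfolding \<pi>_def by blast
    show "inj (\<lambda>i. degree (\<pi> i))" unfolding inj_def deg by simp
    have "UNIV - range (\<lambda>i. degree (\<pi> i)) \<subseteq> {..<E + degree \<tau>}"
    proof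
      fix x assume x: "x \<in> UNIV - range (\<lambda>i. degree (\<pi> i))"
      show "x \<in> {..<E + degree \<tau>}"
      proof (rule ccontr)
        assume "x \<notin> {..<E + degree \<tau>}"
        then have "x = degree (\<pi> (x - E - degree \<tau>))" unfolding deg by simp
        then show False using x by auto
      qed
    qed
    then show "finite (UNIV - range (\<lambda>i. degree (\<pi> i)))" by (rule finite_subset) simp
  qed
  show ?thesis using A B unfolding \<tau>_def ps_def by simp
qed



end
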